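(* Let $(a_n)_{n\ge1}$ be an increasing sequence of positive integers and $x\in\mathbb{R}^d$. Then for every nonempty dyadic cube $\lambda\subseteq[0,1)^d$, $\liminf_{j\to\infty}2^{-dj}\#\mathrm{M}((\{a_nx\})_{n\ge1};\lambda,j)\ge\dfrac{\kappa_*(x)^d\,\underline{\delta}((a_n))}{2^d\mathcal{L}^d(\lambda)}\,\underline{\rho}((a_nx)_{n\ge1};\lambda)$.
   Context: $\mathcal{L}^d$ is Lebesgue measure; $\{z\}$ is the coordinatewise fractional part. For $z\in\mathbb{R}^d$, $\|z\|=\inf_{p\in\mathbb{Z}^d}|z-p|_\infty$, and $\kappa_*(x)=\inf_{q\in\mathbb{N}}q^{1/d}\|qx\|$. $\underline{\delta}((a_n))=\liminf_{N\to\infty}\frac1N\#\{n\ge1:a_n\le N\}$. For a sequence $(y_n)$ in $\mathbb{R}^d$ and a nonempty dyadic cube $\lambda\subseteq[0,1)^d$, $\underline{\rho}((y_n)_{n\ge1};\lambda)=\liminf_{N\to\infty}\frac1N\#\{n\in\{1,\dots,N\}:\{y_n\}\in\lambda\}$. A dyadic cube is $\lambda=2^{-j}(k+[0,1)^d)$, $j\in\mathbb{Z}$, $k\in\mathbb{Z}^d$, with generation $\langle\lambda\rangle=j$; $\mathrm{M}((x_n)_{n\ge1};\lambda,j)$ is the set of dyadic cubes $\lambda'\subseteq\lambda$ of generation $\langle\lambda\rangle+j$ such that $x_n\in\lambda'$ for some $n\le2^{d\langle\lambda'\rangle}$. *)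

theory Defs
  imports "HOL-Analysis.Analysis"
begin

definition fracv :: "real^'n \<Rightarrow> real^'n" where
  "fracv z = (\<chi> i. frac (z $ i))"

definition dist_int :: "real^'n::finite \<Rightarrow> real" where
  "dist_int z = (INF p \<in> {p :: real^'n. \<forall>i. p $ i \<in> \<int>}. Max (range (\<lambda>i. \<bar>z $ i - p $ i\<bar>)))"

definition kappa_star :: "real^'n::finite \<Rightarrow> real" where
  "kappa_star x = (INF q \<in> {q::nat. q \<ge> 1}.
      real q powr (1 / real CARD('n)) * dist_int (of_nat q *\<^sub>R x))"

text \<open>Lower density of the range of a sequence indexed from 1.\<close>
definition lower_density :: "(nat \<Rightarrow> nat) \<Rightarrow> ereal" where
  "lower_density a = liminf (\<lambda>N. ereal (real (card {n. n \<ge> 1 \<and> a n \<le> N}) / real N))"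

definition dyadic_cube :: "int \<Rightarrow> int^'n \<Rightarrow> (real^'n) set" where
  "dyadic_cube j k = {y. \<forall>i. 2 powr (- real_of_int j) * real_of_int (k $ i) \<le> y $ i \<and>
                           y $ i < 2 powr (- real_of_int j) * (real_of_int (k $ i) + 1)}"

definition dyadic_cubes :: "(real^'n) set set" where
  "dyadic_cubes = {c. \<exists>j k. c = dyadic_cube j k}"

definition generation :: "(real^'n) set \<Rightarrow> int" where
  "generation c = (THE j. \<exists>k. c = dyadic_cube j k)"

definition unit_cube :: "(real^'n) set" where
  "unit_cube = {y. \<forall>i. 0 \<le> y $ i \<and> y $ i < 1}"

definition lower_freq :: "(nat \<Rightarrow> real^'n) \<Rightarrow> (real^'n) set \<Rightarrow> ereal" where
  "lower_freq y c = liminf (\<lambda>N. ereal (real (card {n \<in> {1..N}. fracv (y n) \<in> c}) / real N))"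

definition Mset :: "(nat \<Rightarrow> real^'n::finite) \<Rightarrow> (real^'n) set \<Rightarrow> nat \<Rightarrow> (real^'n) set set" where
  "Mset xs c j = {c'. c' \<in> dyadic_cubes \<and> c' \<noteq> {} \<and> c' \<subseteq> c \<and> generation c' = generation c + int j \<and>
       (\<exists>n. n \<ge> 1 \<and> real n \<le> 2 powr (real CARD('n) * real_of_int (generation c')) \<and> xs n \<in> c')}"

end

theory Submission
  imports Defs
begin

lemma mem_dc: "y \<in> dyadic_cube j k \<longleftrightarrow> (\<forall>i. 2 powr (- real_of_int j) * real_of_int (k $ i) \<le> y $ i \<and>
                           y $ i < 2 powr (- real_of_int j) * (real_of_int (k $ i) + 1))"
  by (simp add: dyadic_cube_def)

lemma pw_inv: "2 powr (- real_of_int j) * 2 powr (real_of_int j) = 1"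
  by (simp add: powr_add[symmetric])

lemma cube_in: "y \<in> dyadic_cube J (\<chi> i. \<lfloor>2 powr real_of_int J * y$i\<rfloor>)"
proof -
  have "2 powr (- real_of_int J) * real_of_int \<lfloor>2 powr real_of_int J * y$i\<rfloor> \<le> y $ i \<and>
        y $ i < 2 powr (- real_of_int J) * (real_of_int \<lfloor>2 powr real_of_int J * y$i\<rfloor> + 1)" for i
  proof -
    define w where "w = 2 powr (- real_of_int J)"
    define t where "t = 2 powr real_of_int J * y$i"
    have w: "w > 0" "w * 2 powr real_of_int J = 1" using pw_inv unfolding w_def by auto
    have yt: "y$i = w * t" unfolding t_def using w(2) by (simp add: mult.assoc[symmetric])
    have "w * real_of_int \<lfloor>t\<rfloor> \<le> w * t" using w by (intro mult_left_mono) auto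
    moreover have "w * t < w * (real_of_int \<lfloor>t\<rfloor> + 1)" using w by (intro mult_strict_left_mono) auto
    ultimately show ?thesis using yt unfolding w_def t_def by simp
  qed
  then show ?thesis by (simp add: mem_dc)
qed

lemma cube_idx:
  assumes "y \<in> dyadic_cube J k"
  shows "k = (\<chi> i. \<lfloor>2 powr real_of_int J * y$i\<rfloor>)"
proof -
  have "k $ i = \<lfloor>2 powr real_of_int J * y$i\<rfloor>" for i
  proof -
    define w where "w = 2 powr (- real_of_int J)"
    define v where "v = 2 powr real_of_int J"
    have w: "w > 0" "v > 0" "w * v = 1" using pw_inv unfolding w_def v_def by auto
    have h: "w * k$i \<le> y$i" "y$i < w * (k$i + 1)" using assms unfolding w_def by (auto simp: mem_dc)
    have e: "v * (w * z) = z" for z using w(3) by (metis mult.assoc mult.commute mult_1)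
    have "v * (w * k$i) \<le> v * y$i" using h w by (intro mult_left_mono) auto
    hence a: "k$i \<le> v * y$i" using e by simp
    have "v * y$i < v * (w * (k$i + 1))" using h w by (intro mult_strict_left_mono) auto
    hence b: "v * y$i < k$i + 1" using e by simp
    show ?thesis using a b unfolding v_def by (intro floor_unique[symmetric]) auto
  qed
  then show ?thesis by (simp add: vec_eq_iff)
qed

lemma cube_sub_len:
  assumes "dyadic_cube j k \<subseteq> (dyadic_cube j' k' :: (real^'n) set)"
  shows "2 powr (- real_of_int j) \<le> 2 powr (- real_of_int j')"
proof (rule ccontr)
  assume neg: "\<not> 2 powr (- real_of_int j) \<le> 2 powr (- real_of_int j')"
  define w where "w = 2 powr (- real_of_int j)"
  define w' where "w' = 2 powr (- real_of_int j')"
  have ww: "w' < w" "w > 0" "w' > 0" using neg unfolding w_def w'_def by auto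
  obtain i :: 'n where True by blast
  define p :: "real^'n" where "p = (\<chi> l. w * k$l)"
  have "p \<in> dyadic_cube j k" using ww unfolding p_def by (simp add: mem_dc w_def[symmetric] algebra_simps)
  hence "p \<in> dyadic_cube j' k'" using assms by blast
  hence p1: "w' * k'$i \<le> w * k$i" "w * k$i < w' * (k'$i + 1)"
    unfolding p_def by (auto simp: mem_dc w'_def[symmetric])
  define b where "b = w' * (k'$i + 1)"
  define q :: "real^'n" where "q = (\<chi> l. if l = i then b else w * k$l)"
  have "b < w * (k$i + 1)" using p1 ww unfolding b_def by (simp add: algebra_simps)
  hence "q \<in> dyadic_cube j k" using ww p1 unfolding q_def
    by (auto simp: mem_dc w_def[symmetric] algebra_simps b_def)
  hence "q \<in> dyadic_cube j' k'" using assms by blast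
  hence "q$i < w' * (k'$i + 1)" by (auto simp: mem_dc w'_def[symmetric])
  thus False unfolding q_def b_def by simp
qed

lemma gen_unique:
  assumes "dyadic_cube j k = (dyadic_cube j' k' :: (real^'n) set)"
  shows "j = j'"
proof -
  have "2 powr (- real_of_int j) = 2 powr (- real_of_int j')"
    using cube_sub_len[of j k j' k'] cube_sub_len[of j' k' j k] assms by auto
  hence "- real_of_int j = - real_of_int j'" using powr_inj[of 2] by simp
  thus ?thesis by simp
qed

lemma generation_dc: "generation (dyadic_cube j k :: (real^'n) set) = j"
  unfolding generation_def
  by (rule the_equality) (auto dest: gen_unique)

lemma nest1:
  fixes S T y z :: real and k m :: int and e :: nat
  assumes "T > 0" "S = T * 2^e" "S*k \<le> y" "y < S*(of_int k+1)" "T*m \<le> y" "y < T*(of_int m+1)"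
    "T*m \<le> z" "z < T*(of_int m+1)"
  shows "S*k \<le> z \<and> z < S*(of_int k+1)"
proof -
  have "T * (k * 2^e) < T * (m+1)" using assms by (simp add: algebra_simps)
  hence "real_of_int (k * 2^e) < real_of_int (m+1)" using assms(1) by simp
  hence "k * 2^e \<le> m" by linarith
  hence "real_of_int (k * 2^e) \<le> real_of_int m" by linarith
  hence "T * (k * 2^e) \<le> T * m" using assms(1) by (intro mult_left_mono) auto
  moreover have "S*k = T * (k * 2^e)" using assms(2) by simp
  ultimately have A: "S*k \<le> z" using assms(7) by linarith
  have "T * m < T * ((k+1) * 2^e)" using assms by (simp add: algebra_simps)
  hence "real_of_int m < real_of_int ((k+1) * 2^e)" using assms(1) by simp
  hence "m + 1 \<le> (k+1) * 2^e" by linarith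
  hence "real_of_int (m+1) \<le> real_of_int ((k+1) * 2^e)" by linarith
  hence "T * (of_int m+1) \<le> T * ((k+1) * 2^e)" using assms(1) by (intro mult_left_mono) auto
  moreover have "S*(of_int k+1) = T * ((k+1) * 2^e)" using assms(2) by simp
  ultimately have B: "z < S*(of_int k+1)" using assms(8) by linarith
  show ?thesis using A B by simp
qed

lemma nest:
  assumes "y \<in> dyadic_cube g k" "y \<in> dyadic_cube (g + int e) m"
  shows "dyadic_cube (g + int e) m \<subseteq> (dyadic_cube g k :: (real^'n) set)"
proof
  fix z assume z: "z \<in> dyadic_cube (g + int e) m"
  define S where "S = 2 powr (- real_of_int g)"
  define T where "T = 2 powr (- real_of_int (g + int e))"
  have T: "T > 0" unfolding T_def by simp
  have ST: "S = T * 2^e" unfolding S_def T_def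
    by (simp add: powr_realpow[symmetric] powr_add[symmetric])
  have yS: "\<forall>i. S * k$i \<le> y$i \<and> y$i < S * (of_int (k$i)+1)" using assms(1) unfolding mem_dc S_def by simp
  have yT: "\<forall>i. T * m$i \<le> y$i \<and> y$i < T * (of_int (m$i)+1)" using assms(2) unfolding mem_dc T_def by simp
  have zT: "\<forall>i. T * m$i \<le> z$i \<and> z$i < T * (of_int (m$i)+1)" using z unfolding mem_dc T_def by simp
  have "S * k$i \<le> z$i \<and> z$i < S * (of_int (k$i)+1)" for i
    using nest1[OF T ST, of "k$i" "y$i" "m$i" "z$i"] yS yT zT by blast
  thus "z \<in> dyadic_cube g k" by (simp add: mem_dc S_def)
qed

lemma measure_dc:
  "measure lborel (dyadic_cube g k :: (real^'n) set) \<ge> (2 powr (- real_of_int g)) ^ CARD('n)"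
proof -
  define w where "w = 2 powr (- real_of_int g)"
  have w: "w > 0" unfolding w_def by simp
  define l :: "real^'n" where "l = (\<chi> i. w * k$i)"
  define u :: "real^'n" where "u = (\<chi> i. w * (k$i + 1))"
  have eq: "dyadic_cube g k = {y \<in> space lborel. \<forall>i\<in>UNIV. l$i \<le> y$i \<and> y$i < u$i}"
    by (auto simp: mem_dc l_def u_def w_def)
  have "{y \<in> space lborel. \<forall>i\<in>UNIV. l$i \<le> y$i \<and> y$i < u$i} \<in> sets lborel"
    by measurable
  hence meas: "dyadic_cube g k \<in> sets lborel" using eq by simp
  have sub1: "box l u \<subseteq> dyadic_cube g k" unfolding eq by (auto simp: mem_box_cart less_imp_le)
  have sub2: "dyadic_cube g k \<subseteq> cbox l u" unfolding eq by (auto simp: mem_box_cart less_imp_le)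
  have fm: "dyadic_cube g k \<in> fmeasurable lborel"
    by (rule fmeasurableI2[OF fmeasurable_cbox sub2 meas])
  have "measure lborel (box l u) \<le> measure lborel (dyadic_cube g k)"
    by (rule measure_mono_fmeasurable[OF sub1 _ fm]) simp
  moreover have "measure lborel (box l u) = measure lborel (cbox l u)"
    by (simp add: measure_lborel_box_eq measure_lborel_cbox_eq)
  moreover have "l \<in> cbox l u" using w by (auto simp: mem_box_cart l_def u_def)
  hence "cbox l u \<noteq> {}" by blast
  hence "measure lborel (cbox l u) = prod (\<lambda>i. u$i - l$i) UNIV" by (rule content_cbox_cart)
  moreover have "prod (\<lambda>i. u$i - l$i) UNIV = w ^ CARD('n)" by (simp add: l_def u_def algebra_simps)
  ultimately show ?thesis unfolding w_def by simp
qed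

lemma Max_range_ge0: "0 \<le> Max (range (\<lambda>i::'n::finite. \<bar>f i :: real\<bar>))"
proof -
  obtain i :: 'n where True by blast
  have "\<bar>f i\<bar> \<le> Max (range (\<lambda>i. \<bar>f i\<bar>))" by (rule Max_ge) auto
  thus ?thesis by linarith
qed

lemma dist_int_nonneg: "dist_int (z :: real^'n::finite) \<ge> 0"
  unfolding dist_int_def
proof (rule cINF_greatest)
  show "{p :: real^'n. \<forall>i. p $ i \<in> \<int>} \<noteq> {}" proof - have "(0::real^'n) \<in> {p :: real^'n. \<forall>i. p $ i \<in> \<int>}" by auto thus ?thesis by blast qed
qed (rule Max_range_ge0)

lemma dist_int_le:
  assumes "\<forall>i. p $ i \<in> \<int>"
  shows "dist_int (z :: real^'n::finite) \<le> Max (range (\<lambda>i. \<bar>z $ i - p $ i\<bar>))"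
  unfolding dist_int_def
  by (rule cINF_lower) (auto intro!: bdd_belowI[of _ 0] Max_range_ge0 simp: assms)

lemma dist_int_lt:
  assumes "\<forall>i. p $ i \<in> \<int>" "\<forall>i. \<bar>z $ i - p $ i\<bar> < r"
  shows "dist_int (z :: real^'n::finite) < r"
proof -
  have "Max (range (\<lambda>i. \<bar>z $ i - p $ i\<bar>)) < r" using assms(2) by simp
  thus ?thesis using dist_int_le[OF assms(1), of z] by linarith
qed

lemma kappa_nonneg: "kappa_star (x :: real^'n::finite) \<ge> 0"
  unfolding kappa_star_def
proof (rule cINF_greatest)
  show "{q::nat. q \<ge> 1} \<noteq> {}" by auto
qed (auto intro!: mult_nonneg_nonneg dist_int_nonneg)

lemma kappa_le:
  assumes "q \<ge> 1"
  shows "kappa_star (x :: real^'n::finite) \<le> real q powr (1 / real CARD('n)) * dist_int (of_nat q *\<^sub>R x)"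
  unfolding kappa_star_def
  using assms by (intro cINF_lower) (auto intro!: bdd_belowI[of _ 0] mult_nonneg_nonneg dist_int_nonneg)

lemma kappa_half: "kappa_star (x :: real^'n::finite) \<le> 1/2"
proof -
  have "kappa_star x \<le> dist_int x" using kappa_le[of 1 x] by simp
  also have "\<dots> \<le> Max (range (\<lambda>i. \<bar>x $ i - (\<chi> i. of_int (round (x$i)) :: real^'n) $ i\<bar>))"
    by (rule dist_int_le) auto
  also have "\<dots> \<le> 1/2"
  proof (subst Max_le_iff)
    show "\<forall>a\<in>range (\<lambda>i. \<bar>x $ i - (\<chi> i. of_int (round (x$i)) :: real^'n) $ i\<bar>). a \<le> 1/2"
      using of_int_round_abs_le[where 'a=real] by (auto simp: abs_minus_commute)
  qed auto
  finally show ?thesis .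
qed

lemma sep:
  fixes x :: "real^'n::finite"
  assumes "n1 < n2" "fracv (real n1 *\<^sub>R x) \<in> dyadic_cube J k" "fracv (real n2 *\<^sub>R x) \<in> dyadic_cube J k"
  shows "kappa_star x ^ CARD('n) * 2 powr (real CARD('n) * real_of_int J) < real (n2 - n1)"
proof -
  define q where "q = n2 - n1"
  define d where "d = CARD('n)"
  define w where "w = 2 powr (- real_of_int J)"
  have q1: "q \<ge> 1" using assms(1) unfolding q_def by simp
  have qr: "real q = real n2 - real n1" unfolding q_def using assms(1) by simp
  have w: "w > 0" unfolding w_def by simp
  have d: "d > 0" unfolding d_def by simp
  define p :: "real^'n" where "p = (\<chi> i. of_int (\<lfloor>real n2 * x$i\<rfloor> - \<lfloor>real n1 * x$i\<rfloor>))"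
  have pint: "\<forall>i. p $ i \<in> \<int>" unfolding p_def by simp
  have "\<bar>(real q *\<^sub>R x) $ i - p $ i\<bar> < w" for i
  proof -
    have h1: "w * k$i \<le> frac (real n1 * x$i)" "frac (real n1 * x$i) < w * (k$i + 1)"
      using assms(2) unfolding w_def by (auto simp: mem_dc fracv_def)
    have h2: "w * k$i \<le> frac (real n2 * x$i)" "frac (real n2 * x$i) < w * (k$i + 1)"
      using assms(3) unfolding w_def by (auto simp: mem_dc fracv_def)
    have "(real q *\<^sub>R x) $ i - p $ i = frac (real n2 * x$i) - frac (real n1 * x$i)"
      unfolding p_def qr by (simp add: frac_def algebra_simps)
    thus ?thesis using h1 h2 by (simp add: algebra_simps)
  qed
  hence dl: "dist_int (real q *\<^sub>R x) < w" using dist_int_lt[OF pint] by blast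
  have qp: "real q powr (1 / real d) > 0" using q1 by simp
  have "kappa_star x \<le> real q powr (1 / real d) * dist_int (real q *\<^sub>R x)"
    using kappa_le[OF q1, of x] unfolding d_def by simp
  also have "\<dots> < real q powr (1 / real d) * w" using qp dl by simp
  finally have "kappa_star x ^ d < (real q powr (1 / real d) * w) ^ d"
    using kappa_nonneg[of x] d by (intro power_strict_mono) auto
  also have "\<dots> = real q * w ^ d"
    using q1 d by (simp add: power_mult_distrib powr_power)
  finally have A: "kappa_star x ^ d < real q * w ^ d" .
  have B: "w ^ d * 2 powr (real d * real_of_int J) = 1"
    unfolding w_def using powr_power[of 2 "- real_of_int J" d] by (simp add: powr_add[symmetric])
  have "kappa_star x ^ d * 2 powr (real d * real_of_int J) < real q * w ^ d * 2 powr (real d * real_of_int J)"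
    using A by (intro mult_strict_right_mono) auto
  also have "\<dots> = real q" using B by (simp add: mult.assoc)
  finally show ?thesis unfolding d_def q_def .
qed

lemma spaced_card:
  fixes F :: "real set" and s A :: real
  assumes "finite F" "s > 0" "A \<ge> 0" "\<forall>x\<in>F. 0 \<le> x \<and> x \<le> A"
    "\<forall>x\<in>F. \<forall>y\<in>F. x < y \<longrightarrow> y - x > s"
  shows "real (card F) \<le> A / s + 1"
  using assms
proof (induction "card F" arbitrary: F A rule: less_induct)
  case less
  show ?case
  proof (cases "F = {}")
    case True
    then show ?thesis using less.prems by simp
  next
    case False
    define M where "M = Max F"
    have MF: "M \<in> F" unfolding M_def using False less.prems by simp
    have Mge: "\<forall>y\<in>F. y \<le> M" unfolding M_def using less.prems by simp
    define F' where "F' = F - {M}"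
    have cF: "card F = card F' + 1" unfolding F'_def using MF less.prems
      by (simp add: card_Diff_singleton) (metis False card_0_eq One_nat_def Suc_pred not_gr0)
    have AM: "M \<le> A" using MF less.prems by auto
    show ?thesis
    proof (cases "F' = {}")
      case True
      then show ?thesis using cF less.prems by simp
    next
      case False
      have yl: "\<forall>y\<in>F'. 0 \<le> y \<and> y \<le> M - s"
      proof
        fix y assume y: "y \<in> F'"
        hence "y < M" using Mge unfolding F'_def by force
        hence "M - y > s" using less.prems(5) MF y unfolding F'_def by auto
        thus "0 \<le> y \<and> y \<le> M - s" using less.prems(4) y unfolding F'_def by auto
      qed
      then obtain y where "y \<in> F'" "0 \<le> y" "y \<le> M - s" using False by blast
      hence Ms: "M - s \<ge> 0" by linarith
      have "real (card F') \<le> (M - s) / s + 1"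
        using less.hyps[of F' "M - s"] cF yl Ms less.prems unfolding F'_def by auto
      also have "\<dots> = M / s" using less.prems(2) by (simp add: field_simps)
      finally have "real (card F) \<le> M / s + 1" using cF by simp
      also have "M / s \<le> A / s" using AM less.prems(2) by (simp add: divide_right_mono)
      finally show ?thesis by simp
    qed
  qed
qed

lemma main_count:
  fixes a :: "nat \<Rightarrow> nat" and x :: "real^'n::finite" and c :: "(real^'n) set"
  assumes mono: "strict_mono_on {1..} a"
    and cdef: "c = dyadic_cube g k0"
    and JJ: "J = g + int j" "J \<ge> 0"
    and NN: "N = 2 ^ (CARD('n) * nat J)"
    and kp: "kappa_star x > 0"
  shows "real (card {n \<in> {1..N}. fracv (real (a n) *\<^sub>R x) \<in> c})
     \<le> real (card (Mset (\<lambda>n. fracv (real (a n) *\<^sub>R x)) c j)) *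
        (real (a N) / (kappa_star x ^ CARD('n) * real N) + 1)"
proof -
  define d where "d = CARD('n)"
  define y where "y = (\<lambda>n. fracv (real (a n) *\<^sub>R x))"
  define S where "S = {n \<in> {1..N}. y n \<in> c}"
  define \<phi> where "\<phi> = (\<lambda>n. dyadic_cube J (\<chi> i. \<lfloor>2 powr real_of_int J * y n $ i\<rfloor>) :: (real^'n) set)"
  define MS where "MS = Mset y c j"
  define s where "s = kappa_star x ^ d * real N"
  define B where "B = real (a N) / s + 1"
  have gc: "generation c = g" using cdef generation_dc by simp
  have NR: "real N = 2 powr (real d * real_of_int J)"
  proof -
    have "real N = 2 ^ (d * nat J)" unfolding NN d_def by simp
    also have "\<dots> = 2 powr (real (d * nat J))" by (rule powr_realpow[symmetric]) simp
    also have "real (d * nat J) = real d * real_of_int J" using JJ(2) by simp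
    finally show ?thesis .
  qed
  have NR': "2 powr (real CARD('n) * real_of_int J) = real N" using NR unfolding d_def by simp
  have yphi: "y n \<in> \<phi> n" for n unfolding \<phi>_def by (rule cube_in)
  have fin: "finite S" unfolding S_def by simp
  have sub: "\<phi> ` S \<subseteq> MS"
  proof
    fix C assume "C \<in> \<phi> ` S"
    then obtain n where n: "n \<in> S" "C = \<phi> n" by blast
    have "C \<in> dyadic_cubes" unfolding n(2) \<phi>_def dyadic_cubes_def by blast
    moreover have "C \<noteq> {}" using yphi n by blast
    moreover have "C \<subseteq> c" unfolding n(2) \<phi>_def cdef JJ(1)
      by (rule nest) (use n yphi in \<open>auto simp: S_def cdef \<phi>_def JJ(1)\<close>)
    moreover have "generation C = generation c + int j" unfolding n(2) \<phi>_def
      by (simp add: generation_dc gc JJ(1))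
    moreover have "real n \<le> 2 powr (real CARD('n) * real_of_int (generation C))"
      using n unfolding n(2) \<phi>_def by (simp add: generation_dc NR' S_def)
    moreover have "n \<ge> 1" using n unfolding S_def by simp
    ultimately show "C \<in> MS" unfolding MS_def Mset_def using yphi n by (auto simp: y_def)
  qed
  have MSsub: "MS \<subseteq> \<phi> ` {1..N}"
  proof
    fix C assume C: "C \<in> MS"
    then obtain j' k' where C1: "C = dyadic_cube j' k'" unfolding MS_def Mset_def dyadic_cubes_def by blast
    have j': "j' = J" using C unfolding MS_def Mset_def C1 by (simp add: generation_dc gc JJ(1))
    obtain n where n: "n \<ge> 1" "real n \<le> 2 powr (real CARD('n) * real_of_int (generation C))" "y n \<in> C"
      using C unfolding MS_def Mset_def by (auto simp: y_def)
    have "real n \<le> real N" using n(2) unfolding C1 j' by (simp add: generation_dc NR')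
    hence nN: "n \<in> {1..N}" using n(1) by simp
    have "k' = (\<chi> i. \<lfloor>2 powr real_of_int J * y n $ i\<rfloor>)" using cube_idx n(3) unfolding C1 j' by blast
    hence "C = \<phi> n" unfolding C1 j' \<phi>_def by simp
    thus "C \<in> \<phi> ` {1..N}" using nN by blast
  qed
  hence finMS: "finite MS" by (rule finite_subset) simp
  have cardle: "card (\<phi> ` S) \<le> card MS" by (rule card_mono[OF finMS sub])
  have kd: "kappa_star x ^ d > 0" using kp by simp
  have Npos: "real N > 0" unfolding NN by simp
  have spos: "s > 0" unfolding s_def using kd Npos by simp
  have fib: "real (card {n \<in> S. \<phi> n = C}) \<le> B" for C
  proof -
    define F where "F = {n \<in> S. \<phi> n = C}"
    have FS: "F \<subseteq> {1..N}" unfolding F_def S_def by auto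
    have inj: "inj_on (\<lambda>n. real (a n)) F"
      using strict_mono_on_imp_inj_on[OF mono] FS unfolding inj_on_def
    proof (intro ballI impI)
      fix u v assume uv: "u \<in> F" "v \<in> F" "real (a u) = real (a v)"
      have "u \<in> {1..}" "v \<in> {1..}" using uv FS by auto
      thus "u = v" using strict_mono_on_imp_inj_on[OF mono] uv(3) unfolding inj_on_def by simp
    qed
    have finF: "finite F" using FS finite_subset by blast
    have "real (card ((\<lambda>n. real (a n)) ` F)) \<le> real (a N) / s + 1"
    proof (rule spaced_card)
      show "finite ((\<lambda>n. real (a n)) ` F)" using finF by simp
      show "s > 0" by (rule spos)
      show "real (a N) \<ge> 0" by simp
      show "\<forall>v\<in>(\<lambda>n. real (a n)) ` F. 0 \<le> v \<and> v \<le> real (a N)"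
      proof
        fix v assume "v \<in> (\<lambda>n. real (a n)) ` F"
        then obtain n where n: "n \<in> F" "v = real (a n)" by blast
        have "n \<in> {1..}" "N \<in> {1..}" "n \<le> N" using n FS by auto
        hence "a n \<le> a N" using strict_mono_on_leD[OF mono] by blast
        thus "0 \<le> v \<and> v \<le> real (a N)" using n by simp
      qed
      show "\<forall>v\<in>(\<lambda>n. real (a n)) ` F. \<forall>w\<in>(\<lambda>n. real (a n)) ` F. v < w \<longrightarrow> w - v > s"
      proof (intro ballI impI)
        fix v w assume v: "v \<in> (\<lambda>n. real (a n)) ` F" and w: "w \<in> (\<lambda>n. real (a n)) ` F" and vw: "v < w"
        obtain n1 where n1: "n1 \<in> F" "v = real (a n1)" using v by blast
        obtain n2 where n2: "n2 \<in> F" "w = real (a n2)" using w by blast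
        have alt: "a n1 < a n2" using vw n1 n2 by simp
        have "n1 < n2"
        proof (rule ccontr)
          assume "\<not> n1 < n2"
          hence "a n2 \<le> a n1" using FS n1 n2 strict_mono_on_leD[OF mono, of n2 n1] by force
          thus False using alt by simp
        qed
        have c1: "fracv (real (a n1) *\<^sub>R x) \<in> C" using n1 yphi unfolding F_def y_def by blast
        have c2: "fracv (real (a n2) *\<^sub>R x) \<in> C" using n2 yphi unfolding F_def y_def by blast
        have Cd: "C = \<phi> n1" using n1 unfolding F_def by simp
        have "kappa_star x ^ CARD('n) * 2 powr (real CARD('n) * real_of_int J) < real (a n2 - a n1)"
          using sep[OF alt, of x J] c1 c2 unfolding Cd \<phi>_def by blast
        thus "w - v > s" unfolding s_def NR d_def using alt n1 n2 by (simp add: of_nat_diff)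
      qed
    qed
    thus ?thesis using card_image[OF inj] unfolding B_def F_def by simp
  qed
  have Seq: "S = (\<Union>C\<in>\<phi> ` S. {n \<in> S. \<phi> n = C})" by blast
  have "card (\<Union>C\<in>\<phi> ` S. {n \<in> S. \<phi> n = C}) \<le> (\<Sum>C\<in>\<phi> ` S. card {n \<in> S. \<phi> n = C})"
    by (rule card_UN_le) (simp add: fin)
  hence "card S \<le> (\<Sum>C\<in>\<phi> ` S. card {n \<in> S. \<phi> n = C})" using Seq by simp
  hence "real (card S) \<le> real (\<Sum>C\<in>\<phi> ` S. card {n \<in> S. \<phi> n = C})"
    by (simp only: of_nat_le_iff)
  hence "real (card S) \<le> (\<Sum>C\<in>\<phi> ` S. real (card {n \<in> S. \<phi> n = C}))"
    by (simp only: of_nat_sum)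
  also have "\<dots> \<le> real (card (\<phi> ` S)) * B" using fib by (rule sum_bounded_above)
  also have "\<dots> \<le> real (card MS) * B"
    using cardle spos by (intro mult_right_mono) (auto simp: B_def)
  finally show ?thesis unfolding S_def MS_def B_def s_def y_def d_def .
qed

lemma arith_main:
  fixes Mc P N A kd u v E L G D :: real
  assumes "P \<le> Mc * (A/(kd * N) + 1)" "u * N < P" "v * A < N" "0<u" "0<v" "v \<le> 1" "0 < kd" "kd \<le> 1"
    "N > 0" "A > 0" "D \<ge> 2" "E * N = G" "L > 0" "L * G \<ge> 1" "Mc \<ge> 0" "E > 0"
  shows "kd / (D * L) * v * u \<le> E * Mc"
proof -
  have "A < N / v" using assms(3,5) by (simp add: field_simps)
  hence "A/(kd * N) < (N/v)/(kd * N)" using assms by (intro divide_strict_right_mono) auto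
  also have "(N/v)/(kd * N) = 1/(v * kd)" using assms by (simp add: field_simps)
  finally have B1: "A/(kd * N) + 1 < 1/(v * kd) + 1" by simp
  have vk: "0 < v * kd" "v * kd \<le> 1" using assms by (auto simp: mult_le_one)
  have "1/(v * kd) + 1 = (1 + v * kd)/(v * kd)" using vk assms(5,7) by (simp add: add_divide_distrib)
  also have "\<dots> \<le> D/(v * kd)" using vk assms(11) by (intro divide_right_mono) auto
  finally have B2: "A/(kd * N) + 1 \<le> D/(v * kd)" using B1 by simp
  have "u * N < Mc * (D/(v * kd))"
    using assms(1,2,15) B2 mult_left_mono[OF B2 assms(15)] by linarith
  hence "u * N*(v * kd) < Mc * D" using vk by (simp add: field_simps)
  hence C: "u * v * kd * N / D < Mc" using assms(11) by (simp add: field_simps)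
  have "E * (u * v * kd * N / D) \<le> E * Mc" using C assms(16) by (intro mult_left_mono) auto
  moreover have "E * (u * v * kd * N / D) = u * v * kd * G / D" using assms(12) by (simp add: field_simps)
  moreover have "kd / (D * L) * v * u \<le> u * v * kd * G / D"
  proof -
    have "1 / L \<le> G" using assms(13,14) by (simp add: field_simps)
    hence "(u * v * kd/D) * (1/L) \<le> (u * v * kd/D) * G" using assms by (intro mult_left_mono) auto
    thus ?thesis by (simp add: field_simps)
  qed
  ultimately show ?thesis by linarith
qed

lemma a_ge:
  fixes a :: "nat \<Rightarrow> nat"
  assumes mono: "strict_mono_on {1..} a" and pos: "\<And>n. n \<ge> 1 \<Longrightarrow> a n > 0"
  shows "n \<ge> 1 \<Longrightarrow> a n \<ge> n"
proof (induction n)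
  case 0 then show ?case by simp
next
  case (Suc m)
  show ?case
  proof (cases "m = 0")
    case True then show ?thesis using pos[of 1] by simp
  next
    case False
    hence "a m < a (Suc m)" using strict_mono_onD[OF mono, of m "Suc m"] by simp
    moreover have "a m \<ge> m" using Suc.IH False by simp
    ultimately show ?thesis by simp
  qed
qed

lemma set_eq_aN:
  fixes a :: "nat \<Rightarrow> nat"
  assumes mono: "strict_mono_on {1..} a" and N: "N \<ge> 1"
  shows "{n. n \<ge> 1 \<and> a n \<le> a N} = {1..N}"
proof (intro set_eqI iffI)
  fix n assume n: "n \<in> {n. n \<ge> 1 \<and> a n \<le> a N}"
  have "n \<le> N"
  proof (rule ccontr)
    assume "\<not> n \<le> N"
    hence "a N < a n" using strict_mono_onD[OF mono, of N n] N by simp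
    thus False using n by simp
  qed
  thus "n \<in> {1..N}" using n by simp
next
  fix n assume "n \<in> {1..N}"
  thus "n \<in> {n. n \<ge> 1 \<and> a n \<le> a N}" using strict_mono_on_leD[OF mono, of n N] N by simp
qed

lemma key:
  fixes a :: "nat \<Rightarrow> nat" and x :: "real^'n::finite" and c :: "(real^'n) set"
  assumes mono: "strict_mono_on {1..} a"
    and pos: "\<And>n. n \<ge> 1 \<Longrightarrow> a n > 0"
    and cdef: "c = dyadic_cube g k0"
    and kp: "kappa_star x > 0"
    and u: "0 < u" "ereal u < lower_freq (\<lambda>n. real (a n) *\<^sub>R x) c"
    and v: "0 < v" "ereal v < lower_density a"
  shows "ereal (kappa_star x ^ CARD('n) / (2 ^ CARD('n) * measure lborel c) * v * u)
     \<le> liminf (\<lambda>j. ereal (2 powr (- real CARD('n) * real j)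
             * real (card (Mset (\<lambda>n. fracv (real (a n) *\<^sub>R x)) c j))))"
proof -
  define d where "d = CARD('n)"
  define L where "L = measure lborel c"
  have d1: "d \<ge> 1" unfolding d_def by (simp add: Suc_leI)
  obtain N1 where N1: "\<And>N. N \<ge> N1 \<Longrightarrow> ereal u < ereal (real (card {n \<in> {1..N}. fracv (real (a n) *\<^sub>R x) \<in> c}) / real N)"
    using less_LiminfD[OF u(2)[unfolded lower_freq_def]] unfolding eventually_sequentially by blast
  obtain M1 where M1: "\<And>M. M \<ge> M1 \<Longrightarrow> ereal v < ereal (real (card {n. n \<ge> 1 \<and> a n \<le> M}) / real M)"
    using less_LiminfD[OF v(2)[unfolded lower_density_def]] unfolding eventually_sequentially by blast
  have Lpos: "L \<ge> (2 powr (- real_of_int g)) ^ d" unfolding L_def d_def cdef by (rule measure_dc)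
  have LG: "L * 2 powr (real d * real_of_int g) \<ge> 1"
  proof -
    have "(2 powr (- real_of_int g)) ^ d * 2 powr (real d * real_of_int g) = 1"
      using powr_power[of 2 "- real_of_int g" d] by (simp add: powr_add[symmetric])
    moreover have "(2 powr (- real_of_int g)) ^ d * 2 powr (real d * real_of_int g) \<le> L * 2 powr (real d * real_of_int g)"
      using Lpos by (intro mult_right_mono) auto
    ultimately show ?thesis by simp
  qed
  have L0: "L > 0" using Lpos by (smt (verit) zero_less_power powr_gt_zero)
  have "eventually (\<lambda>j. ereal (kappa_star x ^ CARD('n) / (2 ^ CARD('n) * measure lborel c) * v * u)
     \<le> ereal (2 powr (- real CARD('n) * real j)
             * real (card (Mset (\<lambda>n. fracv (real (a n) *\<^sub>R x)) c j)))) sequentially"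
    unfolding eventually_sequentially
  proof (intro exI allI impI)
    fix j assume j: "j \<ge> nat (- g) + max N1 M1 + 1"
    define J where "J = g + int j"
    define N :: nat where "N = 2 ^ (d * nat J)"
    define Mc where "Mc = real (card (Mset (\<lambda>n. fracv (real (a n) *\<^sub>R x)) c j))"
    define P where "P = real (card {n \<in> {1..N}. fracv (real (a n) *\<^sub>R x) \<in> c})"
    have J0: "J \<ge> 0" "nat J \<ge> max N1 M1 + 1" using j unfolding J_def by auto
    have "nat J < 2 ^ nat J" by (rule less_exp)
    also have "(2::nat) ^ nat J \<le> 2 ^ (d * nat J)" using d1 by (intro power_increasing) auto
    finally have NJ: "N \<ge> nat J" unfolding N_def by simp
    hence NN1: "N \<ge> N1" "N \<ge> 1" using J0 by auto
    have aN: "a N \<ge> N" using a_ge[OF mono pos NN1(2)] .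
    hence aNM: "a N \<ge> M1" using NN1 J0 NJ by linarith
    have Npos: "real N > 0" using NN1 by simp
    have aNpos: "real (a N) > 0" using aN NN1 by simp
    have "u < P / real N" using N1[OF NN1(1)] unfolding P_def by simp
    hence uP: "u * real N < P" using Npos by (simp add: field_simps)
    have "v < real (card {n. n \<ge> 1 \<and> a n \<le> a N}) / real (a N)" using M1[OF aNM] by simp
    hence vN: "v < real N / real (a N)" using set_eq_aN[OF mono NN1(2)] by simp
    hence vA: "v * real (a N) < real N" using aNpos by (simp add: field_simps)
    have "real N / real (a N) \<le> 1" using aN aNpos by simp
    hence v1: "v \<le> 1" using vN by simp
    have kd: "0 < kappa_star x ^ d" "kappa_star x ^ d \<le> 1"
      using kp kappa_half[of x] by (auto intro: power_le_one)
    have mc: "P \<le> Mc * (real (a N) / (kappa_star x ^ d * real N) + 1)"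
      using main_count[OF mono cdef J_def J0(1) N_def[unfolded d_def] kp] unfolding P_def Mc_def d_def .
    have NR: "real N = 2 powr (real d * real_of_int J)"
    proof -
      have "real N = 2 ^ (d * nat J)" unfolding N_def by simp
      also have "\<dots> = 2 powr (real (d * nat J))" by (rule powr_realpow[symmetric]) simp
      also have "real (d * nat J) = real d * real_of_int J" using J0(1) by simp
      finally show ?thesis .
    qed
    have EN: "2 powr (- real d * real j) * real N = 2 powr (real d * real_of_int g)"
      unfolding NR J_def by (simp add: powr_add[symmetric] algebra_simps)
    have D: "(2::real) ^ d \<ge> 2" using d1
      by (metis power_one_right power_increasing one_le_numeral)
    have "kappa_star x ^ d / (2 ^ d * L) * v * u \<le> 2 powr (- real d * real j) * Mc"
      by (rule arith_main[OF mc uP vA u(1) v(1) v1 kd Npos aNpos D EN L0 LG]) (auto simp: Mc_def)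
    thus "ereal (kappa_star x ^ CARD('n) / (2 ^ CARD('n) * measure lborel c) * v * u)
     \<le> ereal (2 powr (- real CARD('n) * real j)
             * real (card (Mset (\<lambda>n. fracv (real (a n) *\<^sub>R x)) c j)))"
      unfolding d_def L_def Mc_def by simp
  qed
  thus ?thesis by (rule Liminf_bounded)
qed

theorem proposition11p5:
  fixes a :: "nat \<Rightarrow> nat" and x :: "real^'n::finite" and c :: "(real^'n) set"
  assumes "strict_mono_on {1..} a"
    and "\<And>n. n \<ge> 1 \<Longrightarrow> a n > 0"
    and "c \<in> dyadic_cubes" and "c \<noteq> {}" and "c \<subseteq> unit_cube"
  shows "liminf (\<lambda>j. ereal (2 powr (- real CARD('n) * real j)
             * real (card (Mset (\<lambda>n. fracv (real (a n) *\<^sub>R x)) c j))))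
         \<ge> ereal (kappa_star x ^ CARD('n) / (2 ^ CARD('n) * measure lborel c))
             * lower_density a * lower_freq (\<lambda>n. real (a n) *\<^sub>R x) c"
proof -
  note mono = assms(1) and pos = assms(2)
  define f where "f = (\<lambda>j. ereal (2 powr (- real CARD('n) * real j)
             * real (card (Mset (\<lambda>n. fracv (real (a n) *\<^sub>R x)) c j))))"
  define K where "K = kappa_star x ^ CARD('n) / (2 ^ CARD('n) * measure lborel c)"
  define \<delta> where "\<delta> = lower_density a"
  define \<rho> where "\<rho> = lower_freq (\<lambda>n. real (a n) *\<^sub>R x) c"
  obtain g k0 where cdef: "c = dyadic_cube g k0" using assms(3) unfolding dyadic_cubes_def by blast
  have G0: "0 \<le> liminf f" unfolding f_def by (intro Liminf_bounded always_eventually) auto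
  have d0: "0 \<le> \<delta>" unfolding \<delta>_def lower_density_def by (intro Liminf_bounded always_eventually) auto
  have d1: "\<delta> \<le> 1"
  proof -
    have "card {n. n \<ge> 1 \<and> a n \<le> N} \<le> N" for N
    proof -
      have "{n. n \<ge> 1 \<and> a n \<le> N} \<subseteq> {1..N}" using a_ge[OF mono pos] by fastforce
      thus ?thesis using card_mono[of "{1..N}"] by fastforce
    qed
    hence "\<forall>N. ereal (real (card {n. n \<ge> 1 \<and> a n \<le> N}) / real N) \<le> ereal 1"
      by (auto simp: divide_le_eq_1)
    hence "\<delta> \<le> liminf (\<lambda>N. ereal 1)" unfolding \<delta>_def lower_density_def
      by (intro Liminf_mono always_eventually) auto
    thus ?thesis using Liminf_const[of sequentially "ereal 1"] by (simp add: one_ereal_def)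
  qed
  have r0: "0 \<le> \<rho>" unfolding \<rho>_def lower_freq_def by (intro Liminf_bounded always_eventually) auto
  have r1: "\<rho> \<le> 1"
  proof -
    have "card {n \<in> {1..N}. fracv (real (a n) *\<^sub>R x) \<in> c} \<le> N" for N
      using card_mono[of "{1..N}" "{n \<in> {1..N}. fracv (real (a n) *\<^sub>R x) \<in> c}"] by fastforce
    hence "\<forall>N. ereal (real (card {n \<in> {1..N}. fracv (real (a n) *\<^sub>R x) \<in> c}) / real N) \<le> ereal 1"
      by (auto simp: divide_le_eq_1)
    hence "\<rho> \<le> liminf (\<lambda>N. ereal 1)" unfolding \<rho>_def lower_freq_def
      by (intro Liminf_mono always_eventually) auto
    thus ?thesis using Liminf_const[of sequentially "ereal 1"] by (simp add: one_ereal_def)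
  qed
  obtain dr where dr: "\<delta> = ereal dr" using d0 d1 by (cases \<delta>) auto
  obtain rr where rr: "\<rho> = ereal rr" using r0 r1 by (cases \<rho>) auto
  have dr0: "dr \<ge> 0" using d0 dr by simp
  have rr0: "rr \<ge> 0" using r0 rr by simp
  have Lpos: "measure lborel c > 0"
    using measure_dc[of g k0] unfolding cdef[symmetric] by (smt (verit) zero_less_power powr_gt_zero)
  have K0: "K \<ge> 0" unfolding K_def using kappa_nonneg[of x] Lpos by simp
  have "ereal K * \<delta> * \<rho> \<le> liminf f"
  proof (cases "kappa_star x = 0")
    case True
    hence "K = 0" unfolding K_def by simp
    thus ?thesis using G0 dr rr by (simp add: zero_ereal_def)
  next
    case False
    hence kp: "kappa_star x > 0" using kappa_nonneg[of x] by simp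
    show ?thesis
    proof (rule dense_le)
      fix z assume z: "z < ereal K * \<delta> * \<rho>"
      show "z \<le> liminf f"
      proof (cases "z \<le> 0")
        case True thus ?thesis using G0 by simp
      next
        case False
        have X: "ereal K * \<delta> * \<rho> = ereal (K * dr * rr)" using dr rr by simp
        obtain zr where zr: "z = ereal zr" using z False X by (cases z) auto
        have zr0: "0 < zr" "zr < K * dr * rr" using z False X zr by auto
        have pp: "K * dr * rr > 0" using zr0 by simp
        hence Kp: "K > 0" "dr > 0" "rr > 0" using K0 dr0 rr0
          by (auto simp: zero_less_mult_iff)
        define t where "t = sqrt (zr / (K * dr * rr))"
        have t: "0 < t" "t < 1" unfolding t_def using zr0 pp by (auto simp: real_sqrt_lt_1_iff)
        have tt: "t * t = zr / (K * dr * rr)" unfolding t_def using zr0 pp by simp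
        have eqz: "K * (t * dr) * (t * rr) = zr"
        proof -
          have "K * (t * dr) * (t * rr) = (t * t) * (K * dr * rr)" by (simp add: algebra_simps)
          also have "\<dots> = zr" unfolding tt using pp Kp by simp
          finally show ?thesis .
        qed
        have "ereal (K * (t * dr) * (t * rr)) \<le> liminf f"
          unfolding f_def K_def
          using key[OF mono pos cdef kp, of "t * rr" "t * dr"] t Kp dr rr
          by (simp add: \<delta>_def \<rho>_def)
        thus ?thesis using zr eqz by simp
      qed
    qed
  qed
  thus ?thesis unfolding f_def K_def \<delta>_def \<rho>_def by simp
qed

end
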